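(* Let $\mathbb{F}$ be a field of characteristic not $2$. The map $w\mapsto w^3$ belongs to $SD(\mathbb{F})\setminus\operatorname{Aut}(\mathbb{F})$ if and only if $\mathbb{F}=\mathbb{F}_5$.
   Context: For fields $\mathbb{F},\widetilde{\mathbb{F}}$, a map $f:\mathbb{F}\to\widetilde{\mathbb{F}}$ is called an SD-map if for all $x\neq y$ in $\mathbb{F}$ one has $f(x)\neq f(y)$ and \[ f\left(\frac{x+y}{x-y}\right)=\frac{f(x)+f(y)}{f(x)-f(y)}. \] For a field $\mathbb{F}$, $SD(\mathbb{F})$ denotes the set of surjective SD-maps $f:\mathbb{F}\to\mathbb{F}$. $\operatorname{Aut}(\mathbb{F})$ is the group of field automorphisms of $\mathbb{F}$; $\mathbb{F}_5$ is the field with $5$ elements. *)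

theory Defs
  imports Main
begin

definition SD_map :: "('a::field \<Rightarrow> 'b::field) \<Rightarrow> bool" where
  "SD_map f \<longleftrightarrow> (\<forall>x y. x \<noteq> y \<longrightarrow>
      f x \<noteq> f y \<and> f ((x + y) / (x - y)) = (f x + f y) / (f x - f y))"

definition SD :: "('a::field \<Rightarrow> 'a) set" where
  "SD = {f. SD_map f \<and> surj f}"

definition Aut :: "('a::field \<Rightarrow> 'a) set" where
  "Aut = {f. bij f \<and> (\<forall>x y. f (x + y) = f x + f y) \<and>
             (\<forall>x y. f (x * y) = f x * f y) \<and> f 1 = 1}"

end

theory Submission
  imports Defs
begin

lemma key_iff:
  fixes x y :: "'a::field"
  assumes "x \<noteq> y" "x^3 \<noteq> y^3"
  shows "((x + y) / (x - y))^3 = (x^3 + y^3) / (x^3 - y^3) \<longleftrightarrow> 6*x*y*(x^4 - y^4) = 0"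
proof -
  have d1: "x - y \<noteq> 0" "x^3 - y^3 \<noteq> 0" using assms by auto
  have "((x + y) / (x - y))^3 = (x^3 + y^3) / (x^3 - y^3) \<longleftrightarrow>
        (x+y)^3 * (x^3 - y^3) = (x^3+y^3) * (x-y)^3"
    using d1 by (simp add: power_divide field_simps)
  also have "\<dots> \<longleftrightarrow> (x+y)^3 * (x^3 - y^3) - (x^3+y^3) * (x-y)^3 = 0" by simp
  also have "(x+y)^3 * (x^3 - y^3) - (x^3+y^3) * (x-y)^3 = 6*x*y*(x^4 - y^4)"
    by (simp add: algebra_simps power2_eq_square power3_eq_cube power4_eq_xxxx)
  finally show ?thesis .
qed

lemma sd_of_p5:
  assumes "\<forall>x::'a::field. x^5 = x"
  shows "(\<lambda>w::'a. w ^ 3) \<in> SD"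
proof -
  have inv: "(x^3)^3 = x" for x :: 'a
  proof -
    have "(x^3)^3 = (x^5) * x^4" by (simp add: power_mult[symmetric] power_add[symmetric])
    also have "\<dots> = x * x^4" using assms by simp
    also have "\<dots> = x^5" by (simp add: power_Suc[symmetric])
    also have "\<dots> = x" using assms by simp
    finally show ?thesis .
  qed
  have inj: "x^3 \<noteq> y^3" if "x \<noteq> y" for x y :: 'a using inv that by metis
  have "6*x*y*(x^4 - y^4) = 0" for x y :: 'a
  proof -
    have e: "z^5 = z * z^4" for z :: 'a by (simp add: power_Suc[symmetric])
    have "6*x*y*(x^4 - y^4) = 6*(x^5*y - x*y^5)"
      unfolding e by (simp add: algebra_simps)
    then show ?thesis using assms by simp
  qed
  then have "SD_map (\<lambda>w::'a. w ^ 3)" unfolding SD_map_def using key_iff inj by blast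
  moreover have "surj (\<lambda>w::'a. w ^ 3)" using inv by (metis surjI)
  ultimately show ?thesis unfolding SD_def by simp
qed


lemma aut_of_3:
  assumes "(3::'a::field) = 0" "(\<lambda>w::'a. w ^ 3) \<in> SD"
  shows "(\<lambda>w::'a. w ^ 3) \<in> Aut"
proof -
  have "inj (\<lambda>w::'a. w ^ 3)" using assms(2) unfolding SD_def SD_map_def inj_def by blast
  moreover have "surj (\<lambda>w::'a. w ^ 3)" using assms(2) unfolding SD_def by blast
  moreover have "(x + y)^3 = x^3 + y^3" for x y :: 'a
  proof -
    have "(x + y)^3 = x^3 + y^3 + 3*(x^2*y + x*y^2)"
      by (simp add: algebra_simps power2_eq_square power3_eq_cube)
    then show ?thesis using assms(1) by simp
  qed
  ultimately show ?thesis unfolding Aut_def by (simp add: bij_def power_mult_distrib)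
qed

lemma not_aut:
  assumes "(3::'a::field) \<noteq> 0" "(2::'a) \<noteq> 0"
  shows "(\<lambda>w::'a. w ^ 3) \<notin> Aut"
proof
  assume "(\<lambda>w::'a. w ^ 3) \<in> Aut"
  then have a: "(1+1::'a)^3 = 1^3 + 1^3" unfolding Aut_def by blast
  have b: "(1+1::'a)^3 = 2 + 2*3" by simp
  have c: "(1::'a)^3 + 1^3 = 2" by simp
  have "(2::'a) + 2*3 = 2" using a b c by metis
  then have "(2::'a)*3 = 0" by (metis add_cancel_right_right)
  then show False using assms by (metis no_zero_divisors)
qed

lemma p5_of_sd:
  assumes "(2::'a::field) \<noteq> 0" "(3::'a) \<noteq> 0" "(\<lambda>w::'a. w ^ 3) \<in> SD"
  shows "\<forall>x::'a. x^5 = x"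
proof
  fix x :: 'a
  show "x^5 = x"
  proof (cases "x = 1")
    case True then show ?thesis by simp
  next
    case False
    have sd: "SD_map (\<lambda>w::'a. w ^ 3)" using assms(3) unfolding SD_def by blast
    then have "x^3 \<noteq> 1^3" using False unfolding SD_map_def by blast
    moreover have "((x + 1) / (x - 1))^3 = (x^3 + 1^3) / (x^3 - 1^3)"
      using sd False unfolding SD_map_def by blast
    ultimately have "6*x*1*(x^4 - 1^4) = 0" using key_iff[of x 1] False by blast
    moreover have "6*x*1*(x^4 - 1^4) = (2*3)*(x*(x^4 - 1))" by simp
    ultimately have "(2*3)*(x*(x^4 - 1)) = 0" by metis
    then have "x*(x^4 - 1) = 0" using assms(1,2) by (metis no_zero_divisors)
    moreover have "x*(x^4 - 1) = x^5 - x" by (simp add: algebra_simps power_Suc[symmetric])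
    ultimately show ?thesis by simp
  qed
qed

lemma five_of_p5:
  assumes "(2::'a::field) \<noteq> 0" "(3::'a) \<noteq> 0" "\<forall>x::'a. x^5 = x"
  shows "(5::'a) = 0"
proof -
  have "(2::'a)^5 = 2" using assms by blast
  moreover have "(2::'a)^5 = 2 + 2 * 3 * 5" by simp
  ultimately have "(2::'a) + 2 * 3 * 5 = 2" by metis
  then have "(2::'a) * 3 * 5 = 0" by (metis add_cancel_right_right)
  then show ?thesis using assms(1,2) by (metis no_zero_divisors)
qed

lemma neq_by_diff: "(b::'a::field) - a \<noteq> 0 \<Longrightarrow> a \<noteq> b" by auto

lemma univ5:
  assumes "(2::'a::field) \<noteq> 0" "(5::'a) = 0"
  shows "card {0,1,2,3::'a,4} = 5 \<and> (3::'a) \<noteq> 0"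
proof -
  have t: "(3::'a) \<noteq> 0"
  proof
    assume "(3::'a) = 0"
    then have "(5::'a) - 3 = 0" using assms by simp
    then show False using assms(1) by simp
  qed
  have e4: "(4::'a) = 2 * 2" by simp
  have "(2::'a) * 2 \<noteq> 0" using assms(1) by (metis no_zero_divisors)
  then have f: "(4::'a) \<noteq> 0" using e4 by metis
  have "(0::'a) \<noteq> 1" "(0::'a) \<noteq> 2" "(0::'a) \<noteq> 3" "(0::'a) \<noteq> 4" using assms(1) t f by auto
  moreover have "(1::'a) \<noteq> 2" "(1::'a) \<noteq> 3" "(1::'a) \<noteq> 4" "(2::'a) \<noteq> 3" "(2::'a) \<noteq> 4" "(3::'a) \<noteq> 4"
    by (rule neq_by_diff; use assms(1) t in simp)+
  ultimately show ?thesis using t by simp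
qed

lemma univ_sub:
  assumes "(5::'a::field) = 0" "\<forall>x::'a. x^5 = x"
  shows "(UNIV::'a set) = {0,1,2,3,4}"
proof -
  have "x \<in> {0,1,2,3,4}" for x :: 'a
  proof -
    have e: "x^5 - x = x*(x-1)*(x-2)*(x-3)*(x-4) + 5*(2*x^4 - 7*x^3 + 10*x^2 - 5*x)"
      by (simp add: algebra_simps power2_eq_square power3_eq_cube power4_eq_xxxx numeral_eq_Suc)
    have "x*(x-1)*(x-2)*(x-3)*(x-4) = 0" using e assms by simp
    then show ?thesis by auto
  qed
  then show ?thesis by blast
qed

lemma p5_of_univ:
  assumes "(5::'a::field) = 0" "(UNIV::'a set) = {0,1,2,3,4}"
  shows "\<forall>x::'a. x^5 = x"
proof
  fix x :: 'a
  have "x \<in> {0,1,2,3,4}" using assms by blast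
  moreover have "(2::'a)^5 = 2 + 5*6" by simp
  moreover have "(3::'a)^5 = 3 + 5*48" by simp
  moreover have "(4::'a)^5 = 4 + 5*204" by simp
  ultimately show "x^5 = x" using assms(1) by auto
qed

lemma five_of_card:
  assumes "(2::'a::field) \<noteq> 0" "finite (UNIV::'a set)" "card (UNIV::'a set) = 5"
  shows "(5::'a) = 0"
proof -
  have "\<not> inj_on (\<lambda>n. of_nat n :: 'a) {0..5}"
  proof
    assume "inj_on (\<lambda>n. of_nat n :: 'a) {0..5}"
    then have "card ((\<lambda>n. of_nat n :: 'a) ` {0..5}) = 6" by (simp add: card_image)
    moreover have "card ((\<lambda>n. of_nat n :: 'a) ` {0..5}) \<le> 5"
      using assms(2,3) by (metis card_mono subset_UNIV)
    ultimately show False by simp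
  qed
  then obtain i j where ij: "i \<in> {0..5::nat}" "j \<in> {0..5::nat}" "i \<noteq> j" "(of_nat i :: 'a) = of_nat j"
    unfolding inj_on_def by blast
  then obtain i j where ij: "i < j" "j \<le> 5" "(of_nat i :: 'a) = of_nat j"
    by (metis atLeastAtMost_iff linorder_neqE_nat)
  define k where "k = j - i"
  have k0: "(of_nat k :: 'a) = 0" using ij unfolding k_def by (simp add: of_nat_diff)
  have "k = 1 \<or> k = 2 \<or> k = 3 \<or> k = 4 \<or> k = 5" using ij unfolding k_def by arith
  moreover have "k \<noteq> 1" using k0 by auto
  moreover have "k \<noteq> 2" using k0 assms(1) by auto
  moreover have "k \<noteq> 4"
  proof
    assume "k = 4"
    then have z: "(4::'a) = 0" using k0 by simp
    have e4: "(4::'a) = 2 * 2" by simp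
    have "(2::'a) * 2 \<noteq> 0" using assms(1) by (metis no_zero_divisors)
    then show False using e4 z by metis
  qed
  moreover have "k \<noteq> 3"
  proof
    assume "k = 3"
    then have t: "(3::'a) = 0" using k0 by simp
    obtain a :: 'a where a: "a \<notin> {0,1,2}"
    proof -
      have "card {0,1,2::'a} \<le> 3" by (simp add: card_insert_le_m1)
      then have "{0,1,2::'a} \<noteq> UNIV" using assms(3) by auto
      then show ?thesis using that by blast
    qed
    have m1: "-1 = (2::'a)" using t by (simp add: eq_neg_iff_add_eq_0)
    have m2: "-2 = (1::'a)" using t by (simp add: eq_neg_iff_add_eq_0)
    have "(2::'a) \<noteq> 1" by (rule neq_by_diff) simp
    then have c1: "card {0,1,2::'a} = 3" using assms(1) by simp
    have c2: "card {a,a+1,a+2} = 3" using \<open>(2::'a) \<noteq> 1\<close> assms(1) by auto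
    have dj: "{0,1,2::'a} \<inter> {a,a+1,a+2} = {}"
    proof -
      have "a + 1 \<noteq> 0" "a + 1 \<noteq> 1" "a + 1 \<noteq> 2" "a + 2 \<noteq> 0" "a + 2 \<noteq> 1" "a + 2 \<noteq> 2"
        using a m1 m2 by (auto simp: eq_diff_eq[symmetric] add_eq_0_iff)
      then show ?thesis using a by auto
    qed
    have "card ({0,1,2::'a} \<union> {a,a+1,a+2}) = 6"
    proof -
      have "card ({0,1,2::'a} \<union> {a,a+1,a+2}) = card {0,1,2::'a} + card {a,a+1,a+2}"
        by (rule card_Un_disjoint[OF _ _ dj]) simp_all
      then show ?thesis using c1 c2 by simp
    qed
    moreover have "card ({0,1,2::'a} \<union> {a,a+1,a+2}) \<le> 5"
      using assms(2,3) by (metis card_mono subset_UNIV)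
    ultimately show False by simp
  qed
  ultimately show ?thesis using k0 by auto
qed

theorem theorem1p6:
  assumes "(2::'a::field) \<noteq> 0"
  shows "((\<lambda>w::'a. w ^ 3) \<in> SD - Aut) \<longleftrightarrow> finite (UNIV::'a set) \<and> card (UNIV::'a set) = 5"
proof
  assume h: "(\<lambda>w::'a. w ^ 3) \<in> SD - Aut"
  have t: "(3::'a) \<noteq> 0" using h aut_of_3 by blast
  have p: "\<forall>x::'a. x^5 = x" using p5_of_sd[OF assms t] h by blast
  have f: "(5::'a) = 0" using five_of_p5[OF assms t p] .
  have u: "(UNIV::'a set) = {0,1,2,3,4}" using univ_sub[OF f p] .
  show "finite (UNIV::'a set) \<and> card (UNIV::'a set) = 5"
  proof
    show "finite (UNIV::'a set)" by (subst u) simp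
    show "card (UNIV::'a set) = 5" using univ5[OF assms f] by (subst u) simp
  qed
next
  assume h: "finite (UNIV::'a set) \<and> card (UNIV::'a set) = 5"
  have f: "(5::'a) = 0" using five_of_card[OF assms] h by blast
  have c: "card {0,1,2,3::'a,4} = 5" and t: "(3::'a) \<noteq> 0" using univ5[OF assms f] by blast+
  have u: "(UNIV::'a set) = {0,1,2,3,4}"
  proof -
    have "{0,1,2,3::'a,4} = UNIV"
      by (rule card_subset_eq) (use h c in simp_all)
    then show ?thesis by simp
  qed
  have "(\<lambda>w::'a. w ^ 3) \<in> SD" using sd_of_p5 p5_of_univ[OF f u] by blast
  then show "(\<lambda>w::'a. w ^ 3) \<in> SD - Aut" using not_aut[OF t assms] by blast
qed

end
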